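(* Let $(R,\mathfrak m)$ be a Noetherian local ring and $M$ a finitely generated $R$-module with $\dim M=d\ge 1$. Then there exists a positive integer $n_4$ such that for all ideals $K\subseteq\mathfrak m^{n_4}$ we have $$(KM+H^0_{\mathfrak m}(M)):_M\mathfrak m=(KM:_M\mathfrak m)+H^0_{\mathfrak m}(M).$$
   Context: For a submodule $N\subseteq M$ and an ideal $J$, $N:_MJ=\{x\in M: Jx\subseteq N\}$. $H^0_{\mathfrak m}(M)$ is the submodule of elements of $M$ annihilated by some power of $\mathfrak m$. *)

theory Defs
  imports Main "HOL-Library.Extended_Nat"
begin

(* Commutative ring R = UNIV :: 'a :: comm_ring_1.  Ideals are R-submodules of R,
   generated ideals are spans in R viewed as a module over itself. *)

definition is_ideal :: "'a::comm_ring_1 set \<Rightarrow> bool" where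
  "is_ideal I \<longleftrightarrow> module.subspace ((*) :: 'a \<Rightarrow> 'a \<Rightarrow> 'a) I"

definition ideal_gen :: "'a::comm_ring_1 set \<Rightarrow> 'a set" where
  "ideal_gen S = module.span ((*) :: 'a \<Rightarrow> 'a \<Rightarrow> 'a) S"

definition prime_ideal :: "'a::comm_ring_1 set \<Rightarrow> bool" where
  "prime_ideal P \<longleftrightarrow> is_ideal P \<and> P \<noteq> UNIV \<and> (\<forall>a b. a * b \<in> P \<longrightarrow> a \<in> P \<or> b \<in> P)"

definition maximal_ideal :: "'a::comm_ring_1 set \<Rightarrow> bool" where
  "maximal_ideal m \<longleftrightarrow> is_ideal m \<and> m \<noteq> UNIV \<and>
     (\<forall>J. is_ideal J \<and> m \<subseteq> J \<longrightarrow> J = m \<or> J = UNIV)"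

definition noetherian_ring :: "'a::comm_ring_1 itself \<Rightarrow> bool" where
  "noetherian_ring _ \<longleftrightarrow> (\<forall>I::'a set. is_ideal I \<longrightarrow> (\<exists>F. finite F \<and> I = ideal_gen F))"

definition local_ring :: "'a::comm_ring_1 set \<Rightarrow> bool" where
  "local_ring m \<longleftrightarrow> maximal_ideal m \<and> (\<forall>J. maximal_ideal J \<longrightarrow> J = m)"

definition ideal_mult :: "'a::comm_ring_1 set \<Rightarrow> 'a set \<Rightarrow> 'a set" where
  "ideal_mult I J = ideal_gen {a * b | a b. a \<in> I \<and> b \<in> J}"

primrec ideal_pow :: "'a::comm_ring_1 set \<Rightarrow> nat \<Rightarrow> 'a set" where
  "ideal_pow I 0 = UNIV"
| "ideal_pow I (Suc n) = ideal_mult I (ideal_pow I n)"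

(* The module M is the whole type 'b, with scalar multiplication scale, satisfying
   'module scale'. *)

definition fin_gen_module :: "('a::comm_ring_1 \<Rightarrow> 'b::ab_group_add \<Rightarrow> 'b) \<Rightarrow> bool" where
  "fin_gen_module scale \<longleftrightarrow> (\<exists>F. finite F \<and> module.span scale F = UNIV)"

definition annihilator :: "('a::comm_ring_1 \<Rightarrow> 'b::ab_group_add \<Rightarrow> 'b) \<Rightarrow> 'a set" where
  "annihilator scale = {a. \<forall>x. scale a x = 0}"

definition module_dim :: "('a::comm_ring_1 \<Rightarrow> 'b::ab_group_add \<Rightarrow> 'b) \<Rightarrow> enat" where
  "module_dim scale = (SUP n \<in> {n. \<exists>P :: nat \<Rightarrow> 'a set.
        (\<forall>i\<le>n. prime_ideal (P i) \<and> annihilator scale \<subseteq> P i) \<and>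
        (\<forall>i<n. P i \<subset> P (Suc i))}. enat n)"

definition ideal_smult :: "('a::comm_ring_1 \<Rightarrow> 'b::ab_group_add \<Rightarrow> 'b) \<Rightarrow> 'a set \<Rightarrow> 'b set" where
  "ideal_smult scale K = module.span scale {scale k x | k x. k \<in> K}"

definition mod_colon :: "('a::comm_ring_1 \<Rightarrow> 'b::ab_group_add \<Rightarrow> 'b) \<Rightarrow> 'b set \<Rightarrow> 'a set \<Rightarrow> 'b set" where
  "mod_colon scale N J = {x. \<forall>j\<in>J. scale j x \<in> N}"

definition submod_sum :: "'b::ab_group_add set \<Rightarrow> 'b set \<Rightarrow> 'b set" where
  "submod_sum N L = {x + y | x y. x \<in> N \<and> y \<in> L}"

definition local_coh0 :: "('a::comm_ring_1 \<Rightarrow> 'b::ab_group_add \<Rightarrow> 'b) \<Rightarrow> 'a set \<Rightarrow> 'b set" where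
  "local_coh0 scale m = {x. \<exists>n. \<forall>a\<in>ideal_pow m n. scale a x = 0}"

end

theory Submission
  imports Defs "HOL-Library.Function_Algebras"
begin

lemma module_mult: "module ((*) :: 'a::comm_ring_1 \<Rightarrow> 'a \<Rightarrow> 'a)"
  by unfold_locales (auto simp: algebra_simps)

interpretation R: module "(*) :: 'a::comm_ring_1 \<Rightarrow> 'a \<Rightarrow> 'a"
  by (rule module_mult)

lemma is_ideal_gen: "is_ideal (ideal_gen S)"
  unfolding is_ideal_def ideal_gen_def by simp

lemma ideal_gen_base: "x \<in> S \<Longrightarrow> x \<in> ideal_gen S"
  unfolding ideal_gen_def by (rule R.span_base)

lemma ideal_gen_minimal: "S \<subseteq> I \<Longrightarrow> is_ideal I \<Longrightarrow> ideal_gen S \<subseteq> I"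
  unfolding ideal_gen_def is_ideal_def by (rule R.span_minimal)

lemma ideal_mult_in: "is_ideal I \<Longrightarrow> c \<in> I \<Longrightarrow> a * c \<in> I"
  unfolding is_ideal_def using R.subspace_scale by blast

lemma ideal_mult_in2: "is_ideal I \<Longrightarrow> c \<in> I \<Longrightarrow> c * a \<in> I"
  using ideal_mult_in[of I c a] by (simp add: mult.commute)

lemma ideal_add: "is_ideal I \<Longrightarrow> x \<in> I \<Longrightarrow> y \<in> I \<Longrightarrow> x + y \<in> I"
  unfolding is_ideal_def using R.subspace_add by blast

lemma ideal_zero: "is_ideal I \<Longrightarrow> 0 \<in> I"
  unfolding is_ideal_def using R.subspace_0 by blast

lemma is_idealI:
  assumes "0 \<in> I" "\<And>x y. x \<in> I \<Longrightarrow> y \<in> I \<Longrightarrow> x + y \<in> I" "\<And>a x. x \<in> I \<Longrightarrow> a * x \<in> I"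
  shows "is_ideal I"
  unfolding is_ideal_def R.subspace_def using assms by blast

lemma ideal_pow_is_ideal: "is_ideal (ideal_pow m n)"
  by (cases n) (auto simp: is_ideal_def ideal_mult_def is_ideal_gen[unfolded is_ideal_def])

lemma ideal_pow_Suc_sub: "ideal_pow m (Suc n) \<subseteq> ideal_pow m n"
  unfolding ideal_pow.simps ideal_mult_def
  by (rule ideal_gen_minimal) (auto intro: ideal_mult_in ideal_pow_is_ideal)

lemma ideal_pow_anti: "n \<le> n' \<Longrightarrow> ideal_pow m n' \<subseteq> ideal_pow m n"
proof (induction n' rule: dec_induct)
  case (step k) then show ?case using ideal_pow_Suc_sub[of m k] by blast
qed simp

lemma pow_in_ideal_pow: "a \<in> m \<Longrightarrow> a ^ n \<in> ideal_pow m n"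
  by (induction n) (auto simp: ideal_mult_def intro!: ideal_gen_base)

lemma ideal_pow_SucE_mult:
  assumes "is_ideal J" "\<And>a b. a \<in> m \<Longrightarrow> b \<in> ideal_pow m n \<Longrightarrow> a * b \<in> J"
  shows "ideal_pow m (Suc n) \<subseteq> J"
  unfolding ideal_pow.simps ideal_mult_def
  by (rule ideal_gen_minimal) (use assms in auto)

definition mono_ideal :: "'a::comm_ring_1 set \<Rightarrow> nat \<Rightarrow> 'a set" where
  "mono_ideal A n = ideal_gen {prod (\<lambda>b. b ^ e b) A | e. sum e A = n}"

lemma mono_step:
  assumes "finite A" "a0 \<in> A" "sum e A = n"
  shows "a0 * prod (\<lambda>b. b ^ e b) A \<in> mono_ideal A (Suc n)"
proof -
  define e' where "e' = e(a0 := Suc (e a0))"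
  have r1: "prod (\<lambda>b. b ^ e' b) A = a0 ^ e' a0 * prod (\<lambda>b. b ^ e' b) (A - {a0})"
    by (rule prod.remove[OF assms(1,2)])
  have r2: "prod (\<lambda>b. b ^ e' b) (A - {a0}) = prod (\<lambda>b. b ^ e b) (A - {a0})"
    by (rule prod.cong) (auto simp: e'_def)
  have r3: "a0 ^ e' a0 = a0 * a0 ^ e a0" by (simp add: e'_def)
  have r4: "prod (\<lambda>b. b ^ e b) A = a0 ^ e a0 * prod (\<lambda>b. b ^ e b) (A - {a0})"
    by (rule prod.remove[OF assms(1,2)])
  have 1: "prod (\<lambda>b. b ^ e' b) A = a0 * prod (\<lambda>b. b ^ e b) A"
    unfolding r1 r2 r3 r4 by (simp only: mult.assoc)
  have s1: "sum e' A = e' a0 + sum e' (A - {a0})" by (rule sum.remove[OF assms(1,2)])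
  have s2: "sum e' (A - {a0}) = sum e (A - {a0})" by (rule sum.cong) (auto simp: e'_def)
  have s3: "sum e A = e a0 + sum e (A - {a0})" by (rule sum.remove[OF assms(1,2)])
  have "sum e' A = Suc n" unfolding s1 s2 using s3 assms(3) by (simp add: e'_def)
  then show ?thesis unfolding mono_ideal_def 1[symmetric]
    by (intro ideal_gen_base CollectI exI[of _ e']) simp
qed

lemma ideal_pow_mono_ideal:
  assumes "finite A"
  shows "ideal_pow (ideal_gen A) n \<subseteq> mono_ideal A n"
proof (induction n)
  case 0
  have "prod (\<lambda>b. b ^ (\<lambda>_. 0::nat) b) A = 1" by simp
  then have "1 \<in> mono_ideal A 0" unfolding mono_ideal_def
    by (intro ideal_gen_base CollectI exI[of _ "\<lambda>_. 0"]) simp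
  then show ?case using ideal_mult_in[OF is_ideal_gen, of 1 _ _] unfolding mono_ideal_def
    by auto
next
  case (Suc n)
  show ?case
  proof (rule ideal_pow_SucE_mult)
    show "is_ideal (mono_ideal A (Suc n))" unfolding mono_ideal_def by (rule is_ideal_gen)
    let ?X = "{a. \<forall>b\<in>ideal_pow (ideal_gen A) n. a * b \<in> mono_ideal A (Suc n)}"
    have I: "is_ideal (mono_ideal A (Suc n))" unfolding mono_ideal_def by (rule is_ideal_gen)
    have "is_ideal ?X"
    proof (rule is_idealI)
      show "0 \<in> ?X" using ideal_zero[OF I] by simp
      show "x + y \<in> ?X" if "x \<in> ?X" "y \<in> ?X" for x y
        using that ideal_add[OF I] by (simp add: distrib_right)
      show "a * x \<in> ?X" if "x \<in> ?X" for a x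
      proof (rule CollectI, rule ballI)
        fix b assume "b \<in> ideal_pow (ideal_gen A) n"
        then have "x * b \<in> mono_ideal A (Suc n)" using that by blast
        then have "a * (x * b) \<in> mono_ideal A (Suc n)" by (rule ideal_mult_in[OF I])
        then show "a * x * b \<in> mono_ideal A (Suc n)" by (simp only: mult.assoc)
      qed
    qed
    moreover have "A \<subseteq> ?X"
    proof
      fix a0 assume a0: "a0 \<in> A"
      let ?Y = "{b. a0 * b \<in> mono_ideal A (Suc n)}"
      have "is_ideal ?Y"
      proof (rule is_idealI)
        show "0 \<in> ?Y" using ideal_zero[OF I] by simp
        show "x + y \<in> ?Y" if "x \<in> ?Y" "y \<in> ?Y" for x y
          using that ideal_add[OF I] by (simp add: distrib_left)
        show "a * x \<in> ?Y" if "x \<in> ?Y" for a x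
        proof -
          have "a * (a0 * x) \<in> mono_ideal A (Suc n)" using that ideal_mult_in[OF I] by blast
          then show ?thesis by (simp only: mem_Collect_eq mult.left_commute)
        qed
      qed
      moreover have "{prod (\<lambda>b. b ^ e b) A | e. sum e A = n} \<subseteq> ?Y"
        using mono_step[OF assms a0] by auto
      ultimately have "mono_ideal A n \<subseteq> ?Y" unfolding mono_ideal_def by (rule ideal_gen_minimal[rotated])
      then show "a0 \<in> ?X" using Suc.IH by auto
    qed
    ultimately have "ideal_gen A \<subseteq> ?X" by (rule ideal_gen_minimal[rotated])
    then show "\<And>a b. a \<in> ideal_gen A \<Longrightarrow> b \<in> ideal_pow (ideal_gen A) n \<Longrightarrow> a * b \<in> mono_ideal A (Suc n)"
      by auto
  qed
qed

lemma mono_ideal_sub: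
  assumes "finite A"
  shows "mono_ideal A (card A * j + 1) \<subseteq> ideal_gen ((\<lambda>a. a ^ j) ` A)"
  unfolding mono_ideal_def
proof (rule ideal_gen_minimal[OF _ is_ideal_gen], safe)
  fix e assume e: "sum e A = card A * j + 1"
  have "\<exists>a\<in>A. j \<le> e a"
  proof (rule ccontr)
    assume "\<not> ?thesis"
    then have "\<forall>a\<in>A. e a \<le> j - 1" by auto
    then have "sum e A \<le> card A * (j - 1)" using sum_bounded_above[of A e "j - 1"] by simp
    also have "\<dots> \<le> card A * j" by simp
    finally show False using e by simp
  qed
  then obtain a where a: "a \<in> A" "j \<le> e a" by blast
  have p1: "prod (\<lambda>b. b ^ e b) A = a ^ e a * prod (\<lambda>b. b ^ e b) (A - {a})"
    by (rule prod.remove[OF assms a(1)])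
  have p2: "a ^ e a = a ^ j * a ^ (e a - j)" using a by (metis le_add_diff_inverse power_add)
  have p3: "prod (\<lambda>b. b ^ e b) A = a ^ j * (a ^ (e a - j) * prod (\<lambda>b. b ^ e b) (A - {a}))"
    unfolding p1 p2 by (simp only: mult.assoc)
  have "a ^ j \<in> ideal_gen ((\<lambda>a. a ^ j) ` A)" using a by (auto intro: ideal_gen_base)
  then show "prod (\<lambda>b. b ^ e b) A \<in> ideal_gen ((\<lambda>a. a ^ j) ` A)"
    unfolding p3 by (rule ideal_mult_in2[OF is_ideal_gen])
qed

lemma ideal_pow_in_powers:
  assumes "finite A"
  shows "\<exists>N. ideal_pow (ideal_gen A) N \<subseteq> ideal_gen ((\<lambda>a. a ^ j) ` A)"
  using ideal_pow_mono_ideal[OF assms] mono_ideal_sub[OF assms] by blast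



context module
begin

lemma noeth_fg:
  assumes noeth: "noetherian_ring TYPE('a)" and fin: "finite F"
  shows "subspace N \<Longrightarrow> N \<subseteq> span F \<Longrightarrow> \<exists>G. finite G \<and> G \<subseteq> N \<and> span G = N"
  using fin
proof (induction F arbitrary: N rule: finite_induct)
  case empty
  then have "N = {0}" using subspace_0 by auto
  then show ?case by (intro exI[of _ "{}"]) auto
next
  case (insert f F N)
  define I where "I = {c. \<exists>y\<in>span F. scale c f + y \<in> N}"
  have "is_ideal I"
  proof (rule is_idealI)
    show "0 \<in> I" unfolding I_def using insert.prems subspace_0 span_zero by force
    show "x + y \<in> I" if xy: "x \<in> I" "y \<in> I" for x y
    proof -
      obtain y1 y2 where "y1 \<in> span F" "scale x f + y1 \<in> N" "y2 \<in> span F" "scale y f + y2 \<in> N"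
        using xy unfolding I_def by blast
      then have "scale (x + y) f + (y1 + y2) \<in> N" "y1 + y2 \<in> span F"
        using subspace_add[OF insert.prems(1), of "scale x f + y1" "scale y f + y2"] span_add
        by (auto simp: scale_left_distrib algebra_simps)
      then show ?thesis unfolding I_def by blast
    qed
    show "a * x \<in> I" if xI: "x \<in> I" for a x
    proof -
      obtain y1 where "y1 \<in> span F" "scale x f + y1 \<in> N" using xI unfolding I_def by blast
      then have "scale (a * x) f + scale a y1 \<in> N" "scale a y1 \<in> span F"
        using subspace_scale[OF insert.prems(1), of "scale x f + y1" a] span_scale
        by (auto simp: scale_right_distrib)
      then show ?thesis unfolding I_def by blast
    qed
  qed
  then obtain B where B: "finite B" "I = ideal_gen B" using noeth unfolding noetherian_ring_def by blast
  have "\<forall>b\<in>B. \<exists>y. y \<in> span F \<and> scale b f + y \<in> N"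
    using B ideal_gen_base[of _ B] unfolding I_def by blast
  then obtain yb where yb: "\<And>b. b \<in> B \<Longrightarrow> yb b \<in> span F \<and> scale b f + yb b \<in> N"
    by metis
  have "subspace (N \<inter> span F)" using insert.prems by (simp add: subspace_inter)
  then obtain G' where G': "finite G'" "G' \<subseteq> N \<inter> span F" "span G' = N \<inter> span F"
    using insert.IH[of "N \<inter> span F"] by blast
  define G where "G = G' \<union> (\<lambda>b. scale b f + yb b) ` B"
  have finG: "finite G" unfolding G_def using G' B by auto
  have GN: "G \<subseteq> N" unfolding G_def using G' yb by auto
  have "span G \<subseteq> N" using span_minimal[OF GN insert.prems(1)] .
  moreover have "N \<subseteq> span G"
  proof
    fix x assume x: "x \<in> N"
    then obtain k where k: "x - scale k f \<in> span F"
      using insert.prems(2) span_breakdown_eq by blast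
    have kI: "k \<in> I" unfolding I_def using k x by (intro CollectI bexI[of _ "x - scale k f"]) auto
    let ?S = "{c. \<exists>w\<in>span G. w - scale c f \<in> span F}"
    have "is_ideal ?S"
    proof (rule is_idealI)
      show "0 \<in> ?S" using span_zero by force
      show "c1 + c2 \<in> ?S" if cc: "c1 \<in> ?S" "c2 \<in> ?S" for c1 c2
      proof -
        obtain w1 w2 where "w1 \<in> span G" "w1 - scale c1 f \<in> span F"
          "w2 \<in> span G" "w2 - scale c2 f \<in> span F" using cc by blast
        then have "w1 + w2 \<in> span G" "(w1 + w2) - scale (c1 + c2) f \<in> span F"
          using span_add[of "w1 - scale c1 f" F "w2 - scale c2 f"] span_add[of w1 G w2]
          by (auto simp: scale_left_distrib algebra_simps)
        then show ?thesis by blast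
      qed
      show "a * c \<in> ?S" if cS: "c \<in> ?S" for a c
      proof -
        obtain w where "w \<in> span G" "w - scale c f \<in> span F" using cS by blast
        then have "scale a w \<in> span G" "scale a w - scale (a * c) f \<in> span F"
          using span_scale[of "w - scale c f" F a] span_scale[of w G a]
          by (auto simp: scale_right_diff_distrib)
        then show ?thesis by blast
      qed
    qed
    moreover have "B \<subseteq> ?S"
    proof
      fix b assume b: "b \<in> B"
      have "scale b f + yb b \<in> span G" unfolding G_def using b by (intro span_base) blast
      moreover have "(scale b f + yb b) - scale b f \<in> span F" using yb[OF b] by simp
      ultimately show "b \<in> ?S" by blast
    qed
    ultimately have "ideal_gen B \<subseteq> ?S" by (rule ideal_gen_minimal[rotated])
    then obtain w where w: "w \<in> span G" "w - scale k f \<in> span F" using kI B by blast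
    have "x - w = (x - scale k f) - (w - scale k f)" by simp
    then have "x - w \<in> span F" using span_diff[OF k w(2)] by simp
    moreover have "x - w \<in> N" using subspace_diff[OF insert.prems(1) x] w(1) \<open>span G \<subseteq> N\<close> by blast
    ultimately have "x - w \<in> span G'" using G' by blast
    then have "x - w \<in> span G" using span_mono[of G' G] unfolding G_def by blast
    then have "(x - w) + w \<in> span G" using span_add w(1) by blast
    then show "x \<in> span G" by simp
  qed
  ultimately show ?case using finG GN by blast
qed

end



context module
begin

lemma noeth_acc:
  assumes noeth: "noetherian_ring TYPE('a)" and fin: "finite F"
    and sub: "\<And>j. subspace (C j)" and inF: "\<And>j. C j \<subseteq> span F"
    and inc: "\<And>j. C j \<subseteq> C (Suc j)"
  shows "\<exists>j0. \<forall>j\<ge>j0. C j = C j0"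
proof -
  have mono: "i \<le> j \<Longrightarrow> C i \<subseteq> C j" for i j
    using lift_Suc_mono_le[of C, OF inc] by blast
  let ?S = "\<Union>(range C)"
  have "subspace ?S"
    unfolding subspace_def
  proof (intro conjI ballI allI)
    show "0 \<in> ?S" using subspace_0[OF sub[of 0]] by blast
    fix x y assume "x \<in> ?S" "y \<in> ?S"
    then obtain i j where "x \<in> C i" "y \<in> C j" by blast
    then have "x \<in> C (max i j)" "y \<in> C (max i j)" using mono[of i "max i j"] mono[of j "max i j"] by auto
    then show "x + y \<in> ?S" using subspace_add[OF sub] by blast
  next
    fix c x assume "x \<in> ?S"
    then obtain i where "x \<in> C i" by blast
    then show "scale c x \<in> ?S" using subspace_scale[OF sub] by blast
  qed
  moreover have "?S \<subseteq> span F" using inF by blast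
  ultimately have "\<exists>G. finite G \<and> G \<subseteq> ?S \<and> span G = ?S"
    by (rule noeth_fg[OF noeth fin])
  then obtain G where G: "finite G" "G \<subseteq> ?S" "span G = ?S" by blast
  have "\<forall>g\<in>G. \<exists>j. g \<in> C j" using G(2) by blast
  then have "\<exists>J. \<forall>g\<in>G. g \<in> C (J g)" by (rule bchoice)
  then obtain J where J0: "\<forall>g\<in>G. g \<in> C (J g)" by blast
  have J: "g \<in> C (J g)" if "g \<in> G" for g using J0 that by blast
  define j0 where "j0 = Max (insert 0 (J ` G))"
  have "G \<subseteq> C j0"
  proof
    fix g assume g: "g \<in> G"
    have "J g \<le> j0" unfolding j0_def using G(1) g by (intro Max_ge) auto
    then show "g \<in> C j0" using J[OF g] mono by blast
  qed
  then have "?S \<subseteq> C j0" using span_minimal[OF _ sub] G(3) by blast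
  have "C j = C j0" if "j \<ge> j0" for j
  proof (rule equalityI)
    show "C j \<subseteq> C j0" using \<open>?S \<subseteq> C j0\<close> by blast
    show "C j0 \<subseteq> C j" using mono[OF that] .
  qed
  then show ?thesis by blast
qed

lemma noeth_maximal:
  assumes noeth: "noetherian_ring TYPE('a)" and fin: "finite F"
    and Q0: "Q0 \<in> \<FF>" and sub: "\<And>Q. Q \<in> \<FF> \<Longrightarrow> subspace Q" "\<And>Q. Q \<in> \<FF> \<Longrightarrow> Q \<subseteq> span F"
  shows "\<exists>Q\<in>\<FF>. \<forall>Q'\<in>\<FF>. Q \<subseteq> Q' \<longrightarrow> Q' = Q"
proof -
  have "\<exists>U\<in>\<FF>. \<forall>X\<in>C. X \<subseteq> U" if C: "C \<in> chains \<FF>" for C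
  proof (cases "C = {}")
    case True then show ?thesis using Q0 by blast
  next
    case False
    have CF: "C \<subseteq> \<FF>" using C unfolding chains_def by auto
    have ch: "X \<subseteq> Y \<or> Y \<subseteq> X" if "X \<in> C" "Y \<in> C" for X Y
      using C that unfolding chains_def chain_subset_def by auto
    have subC: "subspace X" if "X \<in> C" for X using sub(1) CF that by blast
    have "subspace (\<Union>C)"
      unfolding subspace_def
    proof (intro conjI ballI allI)
      obtain X where X: "X \<in> C" using False by blast
      have "0 \<in> X" using subspace_0[OF subC[OF X]] .
      then show "0 \<in> \<Union>C" using X by blast
      fix x y assume "x \<in> \<Union>C" "y \<in> \<Union>C"
      then obtain X Y where XY: "X \<in> C" "Y \<in> C" "x \<in> X" "y \<in> Y" by blast
      then obtain Z where Z: "Z \<in> C" "x \<in> Z" "y \<in> Z" using ch[OF XY(1,2)] by blast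
      have "x + y \<in> Z" using subspace_add[OF subC[OF Z(1)] Z(2,3)] .
      then show "x + y \<in> \<Union>C" using Z(1) by blast
    next
      fix c x assume "x \<in> \<Union>C"
      then obtain X where X: "X \<in> C" "x \<in> X" by blast
      have "scale c x \<in> X" using subspace_scale[OF subC[OF X(1)] X(2)] .
      then show "scale c x \<in> \<Union>C" using X(1) by blast
    qed
    moreover have "\<Union>C \<subseteq> span F" using sub(2) CF by blast
    ultimately have "\<exists>G. finite G \<and> G \<subseteq> \<Union>C \<and> span G = \<Union>C"
      by (rule noeth_fg[OF noeth fin])
    then obtain G where G: "finite G" "G \<subseteq> \<Union>C" "span G = \<Union>C" by blast
    have "subset.chain \<FF> C" using C unfolding chains_alt_def by blast
    then obtain B where B: "B \<in> C" "G \<subseteq> B"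
      using finite_subset_Union_chain[OF G(1,2) False] by blast
    have "span G \<subseteq> B" using span_minimal[OF B(2) subC[OF B(1)]] .
    then have "\<Union>C \<subseteq> B" using G(3) by simp
    then show ?thesis using B CF by blast
  qed
  then show ?thesis by (intro Zorn_Lemma2) blast
qed

end



context module
begin

lemma RA_elem:
  assumes noeth: "noetherian_ring TYPE('a)" and fin: "finite F"
    and Qmax: "Q \<in> \<FF>" "\<forall>Q'\<in>\<FF>. Q \<subseteq> Q' \<longrightarrow> Q' = Q"
    and FF: "\<FF> = {Q. subspace Q \<and> Q \<subseteq> span F \<and> U \<subseteq> Q \<and> Q \<inter> Z \<subseteq> U}"
    and Zt: "\<forall>z\<in>Z. scale (a ^ t) z \<in> U"
  shows "\<exists>j. \<forall>e\<in>span F. scale (a ^ j) e \<in> Q"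
proof -
  have Q: "subspace Q" "Q \<subseteq> span F" "U \<subseteq> Q" "Q \<inter> Z \<subseteq> U" using Qmax(1) FF by auto
  define C where "C j = {y \<in> span F. scale (a ^ j) y \<in> Q}" for j
  have subC: "subspace (C j)" for j
    unfolding subspace_def C_def
  proof (intro conjI ballI allI)
    show "0 \<in> {y \<in> span F. scale (a ^ j) y \<in> Q}" using span_zero subspace_0[OF Q(1)] by simp
  next
    fix x y assume "x \<in> {y \<in> span F. scale (a ^ j) y \<in> Q}" "y \<in> {y \<in> span F. scale (a ^ j) y \<in> Q}"
    then show "x + y \<in> {y \<in> span F. scale (a ^ j) y \<in> Q}"
      using span_add subspace_add[OF Q(1)] by (simp add: scale_right_distrib)
  next
    fix c x assume "x \<in> {y \<in> span F. scale (a ^ j) y \<in> Q}"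
    then have x: "x \<in> span F" "scale (a ^ j) x \<in> Q" by auto
    have "scale c (scale (a ^ j) x) \<in> Q" using subspace_scale[OF Q(1) x(2)] .
    then have "scale (a ^ j) (scale c x) \<in> Q" by (simp only: scale_left_commute)
    then show "scale c x \<in> {y \<in> span F. scale (a ^ j) y \<in> Q}"
      using span_scale[OF x(1)] by simp
  qed
  have CF: "C j \<subseteq> span F" for j unfolding C_def by blast
  have inc: "C j \<subseteq> C (Suc j)" for j
  proof
    fix y assume "y \<in> C j"
    then have y: "y \<in> span F" "scale (a ^ j) y \<in> Q" unfolding C_def by auto
    have "scale a (scale (a ^ j) y) \<in> Q" by (rule subspace_scale[OF Q(1) y(2)])
    then show "y \<in> C (Suc j)" unfolding C_def using y(1) by simp
  qed
  obtain j0 where j0: "\<forall>j\<ge>j0. C j = C j0" using noeth_acc[of F C, OF noeth fin subC CF inc] by blast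
  define Q' where "Q' = {q + scale (a ^ j0) y | q y. q \<in> Q \<and> y \<in> span F}"
  have Q'I: "v \<in> Q'" if "q \<in> Q" "y \<in> span F" "v = q + scale (a ^ j0) y" for v q y
    unfolding Q'_def using that by blast
  have "Q' \<in> \<FF>"
    unfolding FF
  proof (intro CollectI conjI)
    show "subspace Q'" unfolding subspace_def
    proof (intro conjI ballI allI)
      show "0 \<in> Q'" unfolding Q'_def using subspace_0[OF Q(1)] span_zero
        by (intro CollectI exI[of _ 0]) simp
    next
      fix x y assume "x \<in> Q'" "y \<in> Q'"
      then obtain q1 y1 q2 y2 where "x = q1 + scale (a ^ j0) y1" "q1 \<in> Q" "y1 \<in> span F"
        "y = q2 + scale (a ^ j0) y2" "q2 \<in> Q" "y2 \<in> span F" unfolding Q'_def by blast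
      then have f: "x + y = (q1 + q2) + scale (a ^ j0) (y1 + y2)" "q1 + q2 \<in> Q" "y1 + y2 \<in> span F"
        using subspace_add[OF Q(1)] span_add by (auto simp: scale_right_distrib algebra_simps)
      show "x + y \<in> Q'" by (rule Q'I[OF f(2) f(3) f(1)])
    next
      fix c x assume "x \<in> Q'"
      then obtain q1 y1 where "x = q1 + scale (a ^ j0) y1" "q1 \<in> Q" "y1 \<in> span F"
        unfolding Q'_def by blast
      then have f: "scale c x = scale c q1 + scale (a ^ j0) (scale c y1)" "scale c q1 \<in> Q" "scale c y1 \<in> span F"
        using subspace_scale[OF Q(1)] span_scale by (auto simp: scale_right_distrib mult.commute)
      show "scale c x \<in> Q'" by (rule Q'I[OF f(2) f(3) f(1)])
    qed
    show "Q' \<subseteq> span F"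
    proof
      fix x assume "x \<in> Q'"
      then obtain q1 y1 where f: "x = q1 + scale (a ^ j0) y1" "q1 \<in> Q" "y1 \<in> span F"
        unfolding Q'_def by blast
      have "q1 \<in> span F" using f(2) Q(2) by blast
      then show "x \<in> span F" unfolding f(1) by (intro span_add span_scale f(3))
    qed
    show "U \<subseteq> Q'"
    proof
      fix u assume "u \<in> U"
      then have "u \<in> Q" using Q(3) by blast
      then show "u \<in> Q'" unfolding Q'_def using span_zero by (intro CollectI exI[of _ u] exI[of _ 0]) simp
    qed
    show "Q' \<inter> Z \<subseteq> U"
    proof
      fix z assume "z \<in> Q' \<inter> Z"
      then obtain q y where z: "z = q + scale (a ^ j0) y" "q \<in> Q" "y \<in> span F" "z \<in> Z"
        unfolding Q'_def by blast
      have zQ: "scale (a ^ t) z \<in> Q" using Zt z(4) Q(3) by blast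
      have e1: "scale (a ^ t) z = scale (a ^ t) q + scale (a ^ t) (scale (a ^ j0) y)"
        unfolding z(1) by (rule scale_right_distrib)
      have e2: "scale (a ^ t) (scale (a ^ j0) y) = scale (a ^ (j0 + t)) y"
      proof -
        have "a ^ t * a ^ j0 = a ^ (j0 + t)" by (subst power_add) (rule mult.commute)
        then show ?thesis by (simp only: scale_scale)
      qed
      have e3: "scale (a ^ (j0 + t)) y = scale (a ^ t) z - scale (a ^ t) q"
        unfolding e1 e2[symmetric] by (rule add_diff_cancel_left'[symmetric])
      have "scale (a ^ t) z - scale (a ^ t) q \<in> Q"
        by (rule subspace_diff[OF Q(1) zQ subspace_scale[OF Q(1) z(2)]])
      then have "scale (a ^ (j0 + t)) y \<in> Q" unfolding e3 .
      then have "y \<in> C (j0 + t)" unfolding C_def using z(3) by blast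
      moreover have "C (j0 + t) = C j0" using j0 le_add1 by blast
      ultimately have "y \<in> C j0" by (simp only:)
      then have "scale (a ^ j0) y \<in> Q" unfolding C_def by blast
      then have "z \<in> Q" using z(1,2) subspace_add[OF Q(1)] by blast
      then show "z \<in> U" using Q(4) z(4) by blast
    qed
  qed
  moreover have "Q \<subseteq> Q'"
  proof
    fix q assume "q \<in> Q"
    then show "q \<in> Q'" unfolding Q'_def using span_zero by (intro CollectI exI[of _ q] exI[of _ 0]) simp
  qed
  ultimately have "Q' = Q" using Qmax(2) by blast
  moreover have "scale (a ^ j0) e \<in> Q'" if "e \<in> span F" for e
    unfolding Q'_def using that subspace_0[OF Q(1)] by (intro CollectI exI[of _ 0] exI[of _ e]) simp
  ultimately show ?thesis by blast
qed

end



context module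
begin

lemma RA:
  assumes noeth: "noetherian_ring TYPE('a)" and fin: "finite F" and finA: "finite A"
    and U: "subspace U" "U \<subseteq> span F"
    and Zt: "\<forall>a\<in>A. \<forall>z\<in>Z. scale (a ^ t) z \<in> U"
  shows "\<exists>N. \<forall>z\<in>Z. \<forall>w u. w \<in> span {scale c e | c e. c \<in> ideal_pow (ideal_gen A) N \<and> e \<in> span F}
            \<longrightarrow> u \<in> U \<longrightarrow> z = w + u \<longrightarrow> z \<in> U"
proof -
  define FF where "FF = {Q. subspace Q \<and> Q \<subseteq> span F \<and> U \<subseteq> Q \<and> Q \<inter> Z \<subseteq> U}"
  have U_FF: "U \<in> FF" unfolding FF_def using U by blast
  have "\<exists>Q\<in>FF. \<forall>Q'\<in>FF. Q \<subseteq> Q' \<longrightarrow> Q' = Q"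
    by (rule noeth_maximal[OF noeth fin U_FF]) (auto simp: FF_def)
  then obtain Q where Qmax: "Q \<in> FF" "\<forall>Q'\<in>FF. Q \<subseteq> Q' \<longrightarrow> Q' = Q" by blast
  have Q: "subspace Q" "Q \<subseteq> span F" "U \<subseteq> Q" "Q \<inter> Z \<subseteq> U" using Qmax(1) unfolding FF_def by auto
  have "\<forall>a\<in>A. \<exists>j. \<forall>e\<in>span F. scale (a ^ j) e \<in> Q"
  proof
    fix a assume "a \<in> A"
    then have "\<forall>z\<in>Z. scale (a ^ t) z \<in> U" using Zt by blast
    then show "\<exists>j. \<forall>e\<in>span F. scale (a ^ j) e \<in> Q"
      by (rule RA_elem[OF noeth fin Qmax FF_def])
  qed
  then have "\<exists>J. \<forall>a\<in>A. \<forall>e\<in>span F. scale (a ^ J a) e \<in> Q" by (rule bchoice)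
  then obtain J where J: "\<And>a e. a \<in> A \<Longrightarrow> e \<in> span F \<Longrightarrow> scale (a ^ J a) e \<in> Q" by blast
  define j where "j = Max (insert 0 (J ` A))"
  have pw: "scale (a ^ j) e \<in> Q" if a: "a \<in> A" and e: "e \<in> span F" for a e
  proof -
    have "J a \<le> j" unfolding j_def using finA a by (intro Max_ge) auto
    then have "a ^ j = a ^ J a * a ^ (j - J a)" by (metis le_add_diff_inverse power_add)
    then have eq: "scale (a ^ j) e = scale (a ^ J a) (scale (a ^ (j - J a)) e)" by (simp only: scale_scale)
    have "scale (a ^ (j - J a)) e \<in> span F" using span_scale[OF e] .
    then have "scale (a ^ J a) (scale (a ^ (j - J a)) e) \<in> Q" by (rule J[OF a])
    then show ?thesis unfolding eq .
  qed
  obtain N where N: "ideal_pow (ideal_gen A) N \<subseteq> ideal_gen ((\<lambda>a. a ^ j) ` A)"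
    using ideal_pow_in_powers[OF finA] by blast
  let ?T = "{c. \<forall>e\<in>span F. scale c e \<in> Q}"
  have "is_ideal ?T"
  proof (rule is_idealI)
    show "0 \<in> ?T" using subspace_0[OF Q(1)] by simp
    show "x + y \<in> ?T" if xy: "x \<in> ?T" "y \<in> ?T" for x y
      using xy subspace_add[OF Q(1)] by (simp add: scale_left_distrib)
    show "c * x \<in> ?T" if xT: "x \<in> ?T" for c x
    proof (rule CollectI, rule ballI)
      fix e assume "e \<in> span F"
      then have "scale x e \<in> Q" using xT by blast
      then have "scale c (scale x e) \<in> Q" by (rule subspace_scale[OF Q(1)])
      then show "scale (c * x) e \<in> Q" by simp
    qed
  qed
  moreover have "(\<lambda>a. a ^ j) ` A \<subseteq> ?T" using pw by blast
  ultimately have "ideal_gen ((\<lambda>a. a ^ j) ` A) \<subseteq> ?T" by (rule ideal_gen_minimal[rotated])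
  then have NT: "ideal_pow (ideal_gen A) N \<subseteq> ?T" using N by blast
  have "{scale c e | c e. c \<in> ideal_pow (ideal_gen A) N \<and> e \<in> span F} \<subseteq> Q" using NT by blast
  then have spQ: "span {scale c e | c e. c \<in> ideal_pow (ideal_gen A) N \<and> e \<in> span F} \<subseteq> Q"
    by (rule span_minimal[OF _ Q(1)])
  show ?thesis
  proof (intro exI[of _ N] ballI allI impI)
    fix z w u assume z: "z \<in> Z" and w: "w \<in> span {scale c e | c e. c \<in> ideal_pow (ideal_gen A) N \<and> e \<in> span F}"
      and u: "u \<in> U" and zwu: "z = w + u"
    have "w \<in> Q" using w spQ by blast
    moreover have "u \<in> Q" using u Q(3) by blast
    ultimately have "z \<in> Q" unfolding zwu by (rule subspace_add[OF Q(1)])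
    then show "z \<in> U" using Q(4) z by blast
  qed
qed

end



lemma fun_module:
  assumes "module scale"
  shows "module (\<lambda>c (f::'x \<Rightarrow> 'b::ab_group_add) i. scale c (f i))"
proof -
  interpret module scale by fact
  show ?thesis by unfold_locales (auto simp: fun_eq_iff scale_right_distrib scale_left_distrib)
qed

lemma sum_fun_apply: "(\<Sum>a\<in>A. f a) (i::'x) = (\<Sum>a\<in>A. f a i :: 'b::comm_monoid_add)"
  by (induction A rule: infinite_finite_induct) (auto simp: zero_fun_def)

lemma sum_delta:
  assumes "finite A"
  shows "(\<Sum>a\<in>A. (\<lambda>i. if i = a then v a else 0)) = (\<lambda>i. if i \<in> A then v i else (0::'b::comm_monoid_add))"
proof
  fix i
  have "(\<Sum>a\<in>A. (\<lambda>i. if i = a then v a else 0)) i = (\<Sum>a\<in>A. if i = a then v a else 0)"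
    by (rule sum_fun_apply)
  also have "\<dots> = (if i \<in> A then v i else 0)"
    using assms by (simp add: sum.delta)
  finally show "(\<Sum>a\<in>A. (\<lambda>i. if i = a then v a else 0)) i = (if i \<in> A then v i else 0)" .
qed

theorem lemma2p4:
  fixes scale :: "'a::comm_ring_1 \<Rightarrow> 'b::ab_group_add \<Rightarrow> 'b"
    and m :: "'a set"
  assumes "noetherian_ring TYPE('a)"
    and "local_ring m"
    and "module scale"
    and "fin_gen_module scale"
    and "module_dim scale \<ge> 1"
  shows "\<exists>n4::nat. n4 > 0 \<and> (\<forall>K. is_ideal K \<and> K \<subseteq> ideal_pow m n4 \<longrightarrow>
           mod_colon scale (submod_sum (ideal_smult scale K) (local_coh0 scale m)) m =
           submod_sum (mod_colon scale (ideal_smult scale K) m) (local_coh0 scale m))"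
proof -
  note noeth = assms(1) and loc = assms(2) and modl = assms(3) and fg = assms(4)
  interpret M: module scale by (rule modl)
  have m_ideal: "is_ideal m" using loc unfolding local_ring_def maximal_ideal_def by blast
  obtain A where A: "finite A" "m = ideal_gen A" using noeth m_ideal unfolding noetherian_ring_def by blast
  have Am: "a \<in> m" if "a \<in> A" for a using A(2) ideal_gen_base that by blast
  obtain G where G: "finite G" "M.span G = UNIV" using fg unfolding fin_gen_module_def by blast
  define H where "H = local_coh0 scale m"
  have Hmem: "x \<in> H \<longleftrightarrow> (\<exists>n. \<forall>a\<in>ideal_pow m n. scale a x = 0)" for x
    unfolding H_def local_coh0_def by simp
  have H_sub: "M.subspace H"
    unfolding M.subspace_def
  proof (intro conjI ballI allI)
    show "0 \<in> H" unfolding Hmem by simp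
  next
    fix x y assume "x \<in> H" "y \<in> H"
    then obtain n1 n2 where n1: "\<forall>a\<in>ideal_pow m n1. scale a x = 0"
      and n2: "\<forall>a\<in>ideal_pow m n2. scale a y = 0" unfolding Hmem by blast
    have "\<forall>a\<in>ideal_pow m (max n1 n2). scale a (x + y) = 0"
    proof
      fix a assume "a \<in> ideal_pow m (max n1 n2)"
      then have "a \<in> ideal_pow m n1" "a \<in> ideal_pow m n2"
        using ideal_pow_anti[of n1 "max n1 n2" m] ideal_pow_anti[of n2 "max n1 n2" m] by auto
      then have "scale a x = 0" "scale a y = 0" using n1 n2 by auto
      then show "scale a (x + y) = 0" by (simp add: M.scale_right_distrib)
    qed
    then show "x + y \<in> H" unfolding Hmem by blast
  next
    fix c x assume "x \<in> H"
    then obtain n where n: "\<forall>a\<in>ideal_pow m n. scale a x = 0" unfolding Hmem by blast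
    have "\<forall>a\<in>ideal_pow m n. scale a (scale c x) = 0"
    proof
      fix a assume "a \<in> ideal_pow m n"
      then have "scale a x = 0" using n by blast
      then show "scale a (scale c x) = 0" by (metis M.scale_left_commute M.scale_zero_right)
    qed
    then show "scale c x \<in> H" unfolding Hmem by blast
  qed
  have "\<exists>GH. finite GH \<and> GH \<subseteq> H \<and> M.span GH = H"
    by (rule M.noeth_fg[OF noeth G(1) H_sub]) (simp add: G(2))
  then obtain GH where GH: "finite GH" "GH \<subseteq> H" "M.span GH = H" by blast
  have "\<forall>g\<in>GH. \<exists>n. \<forall>a\<in>ideal_pow m n. scale a g = 0" using GH(2) Hmem by blast
  then have "\<exists>nf. \<forall>g\<in>GH. \<forall>a\<in>ideal_pow m (nf g). scale a g = 0" by (rule bchoice)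
  then obtain nf where nf: "\<forall>g\<in>GH. \<forall>a\<in>ideal_pow m (nf g). scale a g = 0" by blast
  define t where "t = Max (insert 0 (nf ` GH))"
  have Ht: "scale a h = 0" if hH: "h \<in> H" and a: "a \<in> ideal_pow m t" for h a
  proof -
    let ?S = "{x. \<forall>a\<in>ideal_pow m t. scale a x = 0}"
    have "M.subspace ?S"
      unfolding M.subspace_def
    proof (intro conjI ballI allI)
      show "0 \<in> ?S" by simp
    next
      fix x y assume "x \<in> ?S" "y \<in> ?S"
      then show "x + y \<in> ?S" by (simp add: M.scale_right_distrib)
    next
      fix c x assume x: "x \<in> ?S"
      show "scale c x \<in> ?S"
      proof (rule CollectI, rule ballI)
        fix a assume "a \<in> ideal_pow m t"
        then have "scale a x = 0" using x by blast
        then show "scale a (scale c x) = 0" by (metis M.scale_left_commute M.scale_zero_right)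
      qed
    qed
    moreover have "GH \<subseteq> ?S"
    proof
      fix g assume g: "g \<in> GH"
      have "nf g \<le> t" unfolding t_def using GH(1) g by (intro Max_ge) auto
      then have "ideal_pow m t \<subseteq> ideal_pow m (nf g)" by (rule ideal_pow_anti)
      then show "g \<in> ?S" using nf g by blast
    qed
    ultimately have "M.span GH \<subseteq> ?S" by (rule M.span_minimal[rotated])
    then show ?thesis using hH a GH(3) by blast
  qed
  have H_char: "w \<in> H" if wA: "\<forall>a\<in>A. scale a w \<in> H" for w
  proof -
    let ?J = "{c. scale c w \<in> H}"
    have "is_ideal ?J"
    proof (rule is_idealI)
      show "0 \<in> ?J" using M.subspace_0[OF H_sub] by simp
      show "x + y \<in> ?J" if "x \<in> ?J" "y \<in> ?J" for x y
        using that M.subspace_add[OF H_sub] by (simp add: M.scale_left_distrib)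
      show "c * x \<in> ?J" if xJ: "x \<in> ?J" for c x
      proof -
        have "scale c (scale x w) \<in> H" using xJ M.subspace_scale[OF H_sub] by blast
        then show ?thesis by simp
      qed
    qed
    moreover have "A \<subseteq> ?J" using wA by blast
    ultimately have mJ: "m \<subseteq> ?J" unfolding A(2) by (rule ideal_gen_minimal[rotated])
    have "ideal_pow m (Suc t) \<subseteq> {c. scale c w = 0}"
    proof (rule ideal_pow_SucE_mult)
      show "is_ideal {c. scale c w = 0}"
      proof (rule is_idealI)
        show "0 \<in> {c. scale c w = 0}" by simp
        show "x + y \<in> {c. scale c w = 0}" if "x \<in> {c. scale c w = 0}" "y \<in> {c. scale c w = 0}" for x y
          using that by (simp add: M.scale_left_distrib)
        show "c * x \<in> {c. scale c w = 0}" if xJ: "x \<in> {c. scale c w = 0}" for c x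
        proof -
          have "scale c (scale x w) = 0" using xJ by simp
          then show ?thesis by simp
        qed
      qed
      fix a b assume a: "a \<in> m" and b: "b \<in> ideal_pow m t"
      have "scale a w \<in> H" using mJ a by blast
      then have "scale b (scale a w) = 0" using Ht b by blast
      then show "a * b \<in> {c. scale c w = 0}" by (simp add: mult.commute)
    qed
    then show ?thesis unfolding Hmem by blast
  qed
  have Zt2: "\<forall>a\<in>A. \<forall>z\<in>H. scale (a ^ t) z \<in> {0}"
    using Ht pow_in_ideal_pow Am by blast
  have "\<exists>N. \<forall>z\<in>H. \<forall>w u. w \<in> M.span {scale c e | c e. c \<in> ideal_pow (ideal_gen A) N \<and> e \<in> M.span G}
            \<longrightarrow> u \<in> {0} \<longrightarrow> z = w + u \<longrightarrow> z \<in> {0}"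
    by (rule M.RA[OF noeth G(1) A(1) M.subspace_single_0 _ Zt2]) (simp add: M.span_zero)
  then obtain k where k: "\<forall>z\<in>H. \<forall>w u. w \<in> M.span {scale c e | c e. c \<in> ideal_pow m k \<and> e \<in> M.span G}
            \<longrightarrow> u \<in> {0} \<longrightarrow> z = w + u \<longrightarrow> z \<in> {0}" unfolding A(2)[symmetric] by blast
  have smult_eq: "M.span {scale c e | c e. c \<in> K \<and> e \<in> M.span G} = ideal_smult scale K" for K
    unfolding ideal_smult_def G(2) by (rule arg_cong[where f = M.span]) auto
  have disj: "z = 0" if "z \<in> H" "z \<in> ideal_smult scale (ideal_pow m k)" for z
    using k that unfolding smult_eq by force
  have KMsub: "M.subspace (ideal_smult scale K)" for K
    unfolding ideal_smult_def by (rule M.subspace_span)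
  define sc' where "sc' = (\<lambda>c (f::'a \<Rightarrow> 'b) i. scale c (f i))"
  interpret P: module sc' unfolding sc'_def by (rule fun_module[OF modl])
  define \<delta> where "\<delta> = (\<lambda>(a::'a) (x::'b). (\<lambda>i::'a. if i = a then x else (0::'b)))"
  have \<delta>0: "\<delta> a 0 = 0" for a unfolding \<delta>_def by (auto simp: fun_eq_iff)
  have \<delta>add: "\<delta> a (x + y) = \<delta> a x + \<delta> a y" for a x y unfolding \<delta>_def by (auto simp: fun_eq_iff)
  have \<delta>scale: "\<delta> a (scale c x) = sc' c (\<delta> a x)" for a c x unfolding \<delta>_def sc'_def by (auto simp: fun_eq_iff)
  define F' where "F' = (\<lambda>(a,g). \<delta> a g) ` (A \<times> G)"
  have finF': "finite F'" using A(1) G(1) unfolding F'_def by simp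
  define E where "E = P.span F'"
  have \<delta>E: "\<delta> a x \<in> E" if a: "a \<in> A" for a x
  proof -
    let ?S = "{x. \<delta> a x \<in> E}"
    have "M.subspace ?S"
      unfolding M.subspace_def
    proof (intro conjI ballI allI)
      show "0 \<in> ?S" unfolding E_def using P.span_zero by (simp add: \<delta>0)
    next
      fix x y assume "x \<in> ?S" "y \<in> ?S"
      then show "x + y \<in> ?S" unfolding E_def by (simp add: \<delta>add P.span_add)
    next
      fix c x assume "x \<in> ?S"
      then show "scale c x \<in> ?S" unfolding E_def by (simp add: \<delta>scale P.span_scale)
    qed
    moreover have "G \<subseteq> ?S"
    proof
      fix g assume "g \<in> G"
      then have "\<delta> a g \<in> F'" unfolding F'_def using a by force
      then show "g \<in> ?S" unfolding E_def by (simp add: P.span_base)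
    qed
    ultimately have "M.span G \<subseteq> ?S" by (rule M.span_minimal[rotated])
    then show ?thesis using G(2) by blast
  qed
  define \<phi> where "\<phi> y = (\<lambda>i. if i \<in> A then scale i y else 0)" for y
  have \<phi>_sum: "\<phi> y = (\<Sum>a\<in>A. \<delta> a (scale a y))" for y
    using sum_delta[OF A(1), of "\<lambda>a. scale a y"] unfolding \<phi>_def \<delta>_def by simp
  have \<phi>E: "\<phi> y \<in> E" for y
    unfolding \<phi>_sum E_def by (rule P.span_sum) (use \<delta>E in \<open>simp add: E_def\<close>)
  define U where "U = {f \<in> E. \<exists>y'\<in>ideal_smult scale (ideal_pow m k). \<forall>a\<in>A. f a - scale a y' \<in> H}"
  have U_sub: "P.subspace U"
    unfolding P.subspace_def
  proof (intro conjI ballI allI)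
    show "0 \<in> U" unfolding U_def E_def
      using P.span_zero M.subspace_0[OF KMsub] M.subspace_0[OF H_sub] by force
  next
    fix f1 f2 assume "f1 \<in> U" "f2 \<in> U"
    then obtain y1 y2 where f: "f1 \<in> E" "y1 \<in> ideal_smult scale (ideal_pow m k)" "\<forall>a\<in>A. f1 a - scale a y1 \<in> H"
      "f2 \<in> E" "y2 \<in> ideal_smult scale (ideal_pow m k)" "\<forall>a\<in>A. f2 a - scale a y2 \<in> H"
      unfolding U_def by blast
    have "f1 + f2 \<in> E" using f(1,4) unfolding E_def by (rule P.span_add)
    moreover have "y1 + y2 \<in> ideal_smult scale (ideal_pow m k)" by (rule M.subspace_add[OF KMsub f(2,5)])
    moreover have "\<forall>a\<in>A. (f1 + f2) a - scale a (y1 + y2) \<in> H"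
    proof
      fix a assume a: "a \<in> A"
      have "(f1 + f2) a - scale a (y1 + y2) = (f1 a - scale a y1) + (f2 a - scale a y2)"
        by (simp add: M.scale_right_distrib algebra_simps)
      moreover have "(f1 a - scale a y1) + (f2 a - scale a y2) \<in> H"
        using M.subspace_add[OF H_sub] f(3,6) a by blast
      ultimately show "(f1 + f2) a - scale a (y1 + y2) \<in> H" by (simp only:)
    qed
    ultimately show "f1 + f2 \<in> U" unfolding U_def by blast
  next
    fix c f assume "f \<in> U"
    then obtain y1 where f: "f \<in> E" "y1 \<in> ideal_smult scale (ideal_pow m k)" "\<forall>a\<in>A. f a - scale a y1 \<in> H"
      unfolding U_def by blast
    have "sc' c f \<in> E" using f(1) unfolding E_def by (rule P.span_scale)
    moreover have "scale c y1 \<in> ideal_smult scale (ideal_pow m k)" by (rule M.subspace_scale[OF KMsub f(2)])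
    moreover have "\<forall>a\<in>A. sc' c f a - scale a (scale c y1) \<in> H"
    proof
      fix a assume a: "a \<in> A"
      have "sc' c f a - scale a (scale c y1) = scale c (f a - scale a y1)"
        unfolding sc'_def by (simp add: M.scale_right_diff_distrib mult.commute)
      moreover have "scale c (f a - scale a y1) \<in> H" using M.subspace_scale[OF H_sub] f(3) a by blast
      ultimately show "sc' c f a - scale a (scale c y1) \<in> H" by (simp only:)
    qed
    ultimately show "sc' c f \<in> U" unfolding U_def by blast
  qed
  have U_E: "U \<subseteq> P.span F'" unfolding U_def E_def by blast
  have Zt3: "\<forall>a\<in>A. \<forall>z\<in>range \<phi>. sc' (a ^ k) z \<in> U"
  proof (intro ballI)
    fix a z assume a: "a \<in> A" and "z \<in> range \<phi>"
    then obtain y where z: "z = \<phi> y" by blast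
    have eq: "sc' (a ^ k) z = \<phi> (scale (a ^ k) y)"
      unfolding z sc'_def \<phi>_def by (auto simp: fun_eq_iff mult.commute)
    have "scale (a ^ k) y \<in> ideal_smult scale (ideal_pow m k)"
      unfolding ideal_smult_def using pow_in_ideal_pow[OF Am[OF a], of k]
      by (intro M.span_base) blast
    moreover have "\<forall>a'\<in>A. \<phi> (scale (a ^ k) y) a' - scale a' (scale (a ^ k) y) \<in> H"
      unfolding \<phi>_def using M.subspace_0[OF H_sub] by simp
    ultimately show "sc' (a ^ k) z \<in> U" unfolding eq U_def using \<phi>E by blast
  qed
  have "\<exists>N. \<forall>z\<in>range \<phi>. \<forall>w u. w \<in> P.span {sc' c e | c e. c \<in> ideal_pow (ideal_gen A) N \<and> e \<in> P.span F'}
            \<longrightarrow> u \<in> U \<longrightarrow> z = w + u \<longrightarrow> z \<in> U"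
    by (rule P.RA[OF noeth finF' A(1) U_sub U_E Zt3])
  then obtain N where N: "\<forall>z\<in>range \<phi>. \<forall>w u. w \<in> P.span {sc' c e | c e. c \<in> ideal_pow m N \<and> e \<in> E}
            \<longrightarrow> u \<in> U \<longrightarrow> z = w + u \<longrightarrow> z \<in> U" unfolding A(2)[symmetric] E_def by blast
  have star: "y \<in> submod_sum (ideal_smult scale (ideal_pow m k)) H"
    if ya: "\<forall>a\<in>A. scale a y \<in> submod_sum (ideal_smult scale (ideal_pow m N)) H" for y
  proof -
    have "\<forall>a\<in>A. \<exists>p. scale a y = fst p + snd p \<and> fst p \<in> ideal_smult scale (ideal_pow m N) \<and> snd p \<in> H"
      using ya unfolding submod_sum_def by force
    then have "\<exists>pp. \<forall>a\<in>A. scale a y = fst (pp a) + snd (pp a) \<and> fst (pp a) \<in> ideal_smult scale (ideal_pow m N) \<and> snd (pp a) \<in> H"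
      by (rule bchoice)
    then obtain pp where pp: "\<And>a. a \<in> A \<Longrightarrow> scale a y = fst (pp a) + snd (pp a)"
      "\<And>a. a \<in> A \<Longrightarrow> fst (pp a) \<in> ideal_smult scale (ideal_pow m N)"
      "\<And>a. a \<in> A \<Longrightarrow> snd (pp a) \<in> H" by blast
    define W where "W = P.span {sc' c e | c e. c \<in> ideal_pow m N \<and> e \<in> E}"
    define w where "w = (\<Sum>a\<in>A. \<delta> a (fst (pp a)))"
    define u where "u = (\<Sum>a\<in>A. \<delta> a (snd (pp a)))"
    have \<delta>W: "\<delta> a x \<in> W" if a: "a \<in> A" and x: "x \<in> ideal_smult scale (ideal_pow m N)" for a x
    proof -
      let ?S = "{x. \<delta> a x \<in> W}"
      have "M.subspace ?S"
        unfolding M.subspace_def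
      proof (intro conjI ballI allI)
        show "0 \<in> ?S" unfolding W_def using P.span_zero by (simp add: \<delta>0)
      next
        fix x y assume "x \<in> ?S" "y \<in> ?S"
        then show "x + y \<in> ?S" unfolding W_def by (simp add: \<delta>add P.span_add)
      next
        fix c x assume "x \<in> ?S"
        then show "scale c x \<in> ?S" unfolding W_def by (simp add: \<delta>scale P.span_scale)
      qed
      moreover have "{scale c x | c x. c \<in> ideal_pow m N} \<subseteq> ?S"
      proof
        fix v assume "v \<in> {scale c x | c x. c \<in> ideal_pow m N}"
        then obtain c x where v: "v = scale c x" "c \<in> ideal_pow m N" by blast
        have "sc' c (\<delta> a x) \<in> {sc' c e | c e. c \<in> ideal_pow m N \<and> e \<in> E}"
          using v(2) \<delta>E[OF a] by blast
        then have "sc' c (\<delta> a x) \<in> W" unfolding W_def by (rule P.span_base)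
        then show "v \<in> ?S" unfolding v(1) by (simp add: \<delta>scale)
      qed
      ultimately have "ideal_smult scale (ideal_pow m N) \<subseteq> ?S"
        unfolding ideal_smult_def by (rule M.span_minimal[rotated])
      then show ?thesis using x by blast
    qed
    have wW: "w \<in> W" unfolding w_def W_def
      by (rule P.span_sum) (use \<delta>W pp(2) in \<open>simp add: W_def\<close>)
    have uE: "u \<in> E" unfolding u_def E_def
      by (rule P.span_sum) (use \<delta>E in \<open>simp add: E_def\<close>)
    have w_eq: "w = (\<lambda>i. if i \<in> A then fst (pp i) else 0)"
      unfolding w_def \<delta>_def by (rule sum_delta[OF A(1)])
    have u_eq: "u = (\<lambda>i. if i \<in> A then snd (pp i) else 0)"
      unfolding u_def \<delta>_def by (rule sum_delta[OF A(1)])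
    have "u \<in> U"
    proof -
      have "0 \<in> ideal_smult scale (ideal_pow m k)" by (rule M.subspace_0[OF KMsub])
      moreover have "\<forall>a\<in>A. u a - scale a 0 \<in> H" using pp(3) unfolding u_eq by simp
      ultimately show ?thesis unfolding U_def using uE by blast
    qed
    moreover have "\<phi> y = w + u"
      unfolding w_eq u_eq \<phi>_def using pp(1) by (auto simp: fun_eq_iff)
    ultimately have "\<phi> y \<in> U" using N wW unfolding W_def by blast
    then obtain y' where y': "y' \<in> ideal_smult scale (ideal_pow m k)" "\<forall>a\<in>A. \<phi> y a - scale a y' \<in> H"
      unfolding U_def by blast
    have "\<forall>a\<in>A. scale a (y - y') \<in> H"
      using y'(2) unfolding \<phi>_def by (simp add: M.scale_right_diff_distrib)
    then have "y - y' \<in> H" by (rule H_char)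
    moreover have "y = y' + (y - y')" by simp
    ultimately show ?thesis unfolding submod_sum_def using y'(1) by blast
  qed
  define n4 where "n4 = Suc (max N k)"
  have "\<forall>K. is_ideal K \<and> K \<subseteq> ideal_pow m n4 \<longrightarrow>
           mod_colon scale (submod_sum (ideal_smult scale K) H) m =
           submod_sum (mod_colon scale (ideal_smult scale K) m) H"
  proof (intro allI impI)
    fix K assume K: "is_ideal K \<and> K \<subseteq> ideal_pow m n4"
    have KM_le: "ideal_smult scale K \<subseteq> ideal_smult scale (ideal_pow m n)" if "n \<le> n4" for n
    proof -
      have "K \<subseteq> ideal_pow m n" using K ideal_pow_anti[OF that, of m] by blast
      then show ?thesis unfolding ideal_smult_def by (intro M.span_mono) blast
    qed
    have KN: "ideal_smult scale K \<subseteq> ideal_smult scale (ideal_pow m N)" by (rule KM_le) (simp add: n4_def)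
    have Kk: "ideal_smult scale K \<subseteq> ideal_smult scale (ideal_pow m k)" by (rule KM_le) (simp add: n4_def)
    show "mod_colon scale (submod_sum (ideal_smult scale K) H) m =
           submod_sum (mod_colon scale (ideal_smult scale K) m) H"
    proof (rule equalityI; rule subsetI)
      fix x assume x: "x \<in> mod_colon scale (submod_sum (ideal_smult scale K) H) m"
      then have xj: "\<forall>j\<in>m. scale j x \<in> submod_sum (ideal_smult scale K) H"
        unfolding mod_colon_def by blast
      have "\<forall>a\<in>A. scale a x \<in> submod_sum (ideal_smult scale (ideal_pow m N)) H"
        using xj Am KN unfolding submod_sum_def by blast
      then have "x \<in> submod_sum (ideal_smult scale (ideal_pow m k)) H" by (rule star)
      then obtain y' h0 where xy: "x = y' + h0" "y' \<in> ideal_smult scale (ideal_pow m k)" "h0 \<in> H"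
        unfolding submod_sum_def by blast
      have "y' \<in> mod_colon scale (ideal_smult scale K) m"
        unfolding mod_colon_def
      proof (rule CollectI, rule ballI)
        fix j assume j: "j \<in> m"
        obtain \<kappa> h1 where kh: "scale j x = \<kappa> + h1" "\<kappa> \<in> ideal_smult scale K" "h1 \<in> H"
          using xj j unfolding submod_sum_def by blast
        define d where "d = scale j y' - \<kappa>"
        have d1: "d = h1 - scale j h0"
          using kh(1) unfolding d_def xy(1) by (simp add: M.scale_right_distrib algebra_simps)
        have "d \<in> H" unfolding d1 using M.subspace_diff[OF H_sub kh(3) M.subspace_scale[OF H_sub xy(3)]] .
        moreover have "d \<in> ideal_smult scale (ideal_pow m k)"
          unfolding d_def using M.subspace_diff[OF KMsub M.subspace_scale[OF KMsub xy(2)]] kh(2) Kk by blast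
        ultimately have "d = 0" by (rule disj)
        then have "scale j y' = \<kappa>" unfolding d_def by simp
        then show "scale j y' \<in> ideal_smult scale K" using kh(2) by simp
      qed
      then show "x \<in> submod_sum (mod_colon scale (ideal_smult scale K) m) H"
        unfolding submod_sum_def using xy(1,3) by blast
    next
      fix x assume "x \<in> submod_sum (mod_colon scale (ideal_smult scale K) m) H"
      then obtain y h where xy: "x = y + h" "y \<in> mod_colon scale (ideal_smult scale K) m" "h \<in> H"
        unfolding submod_sum_def by blast
      have "\<forall>j\<in>m. scale j x \<in> submod_sum (ideal_smult scale K) H"
      proof
        fix j assume j: "j \<in> m"
        have "scale j y \<in> ideal_smult scale K" using xy(2) j unfolding mod_colon_def by blast
        moreover have "scale j h \<in> H" by (rule M.subspace_scale[OF H_sub xy(3)])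
        moreover have "scale j x = scale j y + scale j h" unfolding xy(1) by (rule M.scale_right_distrib)
        ultimately show "scale j x \<in> submod_sum (ideal_smult scale K) H" unfolding submod_sum_def by blast
      qed
      then show "x \<in> mod_colon scale (submod_sum (ideal_smult scale K) H) m"
        unfolding mod_colon_def by blast
    qed
  qed
  then show ?thesis unfolding H_def by (intro exI[of _ n4]) (simp add: n4_def)
qed


end
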